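(* Let $G=(V,E)$ be an infinite, connected, locally finite, vertex-transitive graph, $o\in V$, $\Gamma\subset\operatorname{Aut}(G)$ a group acting transitively on $V$, and $\mathbb{P}$ a $\Gamma$-invariant and ergodic probability measure on $\mathbb{R}^V$ with $\mathbb{E}|s(o)|<\infty$. If $\mathbb{E}\,s(o)>1$, then $\mathbb{P}\{s\text{ stabilizes}\}=0$.
   Context: $\Delta u(x)=\sum_{y\sim x}(u(y)-u(x))$. $s:V\to\mathbb{R}$ stabilizes if there exists $f:V\to[0,\infty)$ with $s+\Delta f\le1$ pointwise. $\Gamma$-invariance means $T_\alpha s$ has law $\mathbb{P}$ whenever $s$ does, where $(T_\alpha f)(x)=f(\alpha^{-1}x)$, $\alpha\in\Gamma$; ergodicity is with respect to this $\Gamma$-action. *)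

theory Defs
  imports "HOL-Probability.Probability"
begin

definition simple_graph :: "('v \<Rightarrow> 'v \<Rightarrow> bool) \<Rightarrow> bool" where
  "simple_graph E \<longleftrightarrow> (\<forall>x y. E x y \<longrightarrow> E y x) \<and> (\<forall>x. \<not> E x x)"

definition locally_finite :: "('v \<Rightarrow> 'v \<Rightarrow> bool) \<Rightarrow> bool" where
  "locally_finite E \<longleftrightarrow> (\<forall>x. finite {y. E x y})"

definition connected_graph :: "('v \<Rightarrow> 'v \<Rightarrow> bool) \<Rightarrow> bool" where
  "connected_graph E \<longleftrightarrow> (\<forall>x y. E\<^sup>*\<^sup>* x y)"

definition graph_aut :: "('v \<Rightarrow> 'v \<Rightarrow> bool) \<Rightarrow> ('v \<Rightarrow> 'v) \<Rightarrow> bool" where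
  "graph_aut E \<alpha> \<longleftrightarrow> bij \<alpha> \<and> (\<forall>x y. E x y \<longleftrightarrow> E (\<alpha> x) (\<alpha> y))"

definition vertex_transitive :: "('v \<Rightarrow> 'v \<Rightarrow> bool) \<Rightarrow> bool" where
  "vertex_transitive E \<longleftrightarrow> (\<forall>x y. \<exists>\<alpha>. graph_aut E \<alpha> \<and> \<alpha> x = y)"

definition aut_subgroup :: "('v \<Rightarrow> 'v \<Rightarrow> bool) \<Rightarrow> ('v \<Rightarrow> 'v) set \<Rightarrow> bool" where
  "aut_subgroup E \<Gamma> \<longleftrightarrow> (\<forall>\<alpha>\<in>\<Gamma>. graph_aut E \<alpha>) \<and> id \<in> \<Gamma> \<and>
     (\<forall>\<alpha>\<in>\<Gamma>. \<forall>\<beta>\<in>\<Gamma>. \<alpha> \<circ> \<beta> \<in> \<Gamma>) \<and> (\<forall>\<alpha>\<in>\<Gamma>. inv \<alpha> \<in> \<Gamma>)"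

definition transitive_action :: "('v \<Rightarrow> 'v) set \<Rightarrow> bool" where
  "transitive_action \<Gamma> \<longleftrightarrow> (\<forall>x y. \<exists>\<alpha>\<in>\<Gamma>. \<alpha> x = y)"

definition shift :: "('v \<Rightarrow> 'v) \<Rightarrow> ('v \<Rightarrow> 'a) \<Rightarrow> ('v \<Rightarrow> 'a)" where
  "shift \<alpha> f = (\<lambda>x. f (inv \<alpha> x))"

definition config_space :: "('v \<Rightarrow> real) measure" where
  "config_space = PiM UNIV (\<lambda>_. borel)"

definition gamma_invariant :: "('v \<Rightarrow> 'v) set \<Rightarrow> ('v \<Rightarrow> real) measure \<Rightarrow> bool" where
  "gamma_invariant \<Gamma> M \<longleftrightarrow> (\<forall>\<alpha>\<in>\<Gamma>. distr M M (shift \<alpha>) = M)"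

definition gamma_ergodic :: "('v \<Rightarrow> 'v) set \<Rightarrow> ('v \<Rightarrow> real) measure \<Rightarrow> bool" where
  "gamma_ergodic \<Gamma> M \<longleftrightarrow> (\<forall>A\<in>sets M.
      (\<forall>\<alpha>\<in>\<Gamma>. shift \<alpha> -` A \<inter> space M = A) \<longrightarrow> measure M A = 0 \<or> measure M A = 1)"

definition laplacian :: "('v \<Rightarrow> 'v \<Rightarrow> bool) \<Rightarrow> ('v \<Rightarrow> real) \<Rightarrow> 'v \<Rightarrow> real" where
  "laplacian E u x = (\<Sum>y\<in>{y. E x y}. u y - u x)"

definition stabilizes :: "('v \<Rightarrow> 'v \<Rightarrow> bool) \<Rightarrow> ('v \<Rightarrow> real) \<Rightarrow> bool" where
  "stabilizes E s \<longleftrightarrow> (\<exists>f::'v \<Rightarrow> real. (\<forall>x. f x \<ge> 0) \<and> (\<forall>x. s x + laplacian E f x \<le> 1))"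

end

theory Submission imports Defs begin

definition nbr :: "('v \<Rightarrow> 'v \<Rightarrow> bool) \<Rightarrow> 'v \<Rightarrow> 'v set" where
  "nbr E x = {y. E x y}"

definition Fop :: "('v \<Rightarrow> 'v \<Rightarrow> bool) \<Rightarrow> real \<Rightarrow> ('v \<Rightarrow> real) \<Rightarrow> ('v \<Rightarrow> real) \<Rightarrow> 'v \<Rightarrow> real" where
  "Fop E k s g x = min k (max 0 ((s x - 1 + (\<Sum>y\<in>nbr E x. g y)) / real (card (nbr E x))))"

definition iter :: "('v \<Rightarrow> 'v \<Rightarrow> bool) \<Rightarrow> real \<Rightarrow> ('v \<Rightarrow> real) \<Rightarrow> nat \<Rightarrow> 'v \<Rightarrow> real" where
  "iter E k s n = (Fop E k s ^^ n) (\<lambda>_. 0)"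

definition hk :: "('v \<Rightarrow> 'v \<Rightarrow> bool) \<Rightarrow> real \<Rightarrow> ('v \<Rightarrow> real) \<Rightarrow> 'v \<Rightarrow> real" where
  "hk E k s x = lim (\<lambda>n. iter E k s n x)"

lemma iter_Suc: "iter E k s (Suc n) = Fop E k s (iter E k s n)"
  by (simp add: iter_def)

lemma iter_0: "iter E k s 0 = (\<lambda>_. 0)"
  by (simp add: iter_def)

lemma Fop_mono:
  assumes "\<And>y. g y \<le> g' y" shows "Fop E k s g x \<le> Fop E k s g' x"
proof -
  have "(\<Sum>y\<in>nbr E x. g y) \<le> (\<Sum>y\<in>nbr E x. g' y)" by (rule sum_mono) (use assms in auto)
  then have "(s x - 1 + (\<Sum>y\<in>nbr E x. g y)) / real (card (nbr E x)) \<le> (s x - 1 + (\<Sum>y\<in>nbr E x. g' y)) / real (card (nbr E x))"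
    by (intro divide_right_mono) auto
  then show ?thesis unfolding Fop_def by linarith
qed

lemma Fop_bounds: assumes "0 \<le> k" shows "0 \<le> Fop E k s g x \<and> Fop E k s g x \<le> k"
  using assms unfolding Fop_def by (simp add: min_def max_def)

lemma iter_bounds: assumes "0 \<le> k" shows "0 \<le> iter E k s n x \<and> iter E k s n x \<le> k"
  using assms by (cases n) (auto simp: iter_0 iter_Suc Fop_bounds)

lemma iter_ge0: assumes "0 \<le> k" shows "0 \<le> iter E k s n x" using iter_bounds[OF assms, of E s n x] by simp
lemma iter_lek: assumes "0 \<le> k" shows "iter E k s n x \<le> k" using iter_bounds[OF assms, of E s n x] by simp

lemma iter_mono_Suc: assumes "0 \<le> k" shows "iter E k s n x \<le> iter E k s (Suc n) x"
proof (induction n arbitrary: x)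
  case 0
  show ?case unfolding iter_0 iter_Suc Fop_def using assms by simp
next
  case (Suc n)
  show ?case unfolding iter_Suc[of E k s "Suc n"] iter_Suc[of E k s n]
    by (rule Fop_mono) (use Suc in \<open>simp add: iter_Suc\<close>)
qed

lemma iter_incseq: "0 \<le> k \<Longrightarrow> incseq (\<lambda>n. iter E k s n x)"
  by (rule incseq_SucI) (rule iter_mono_Suc)

lemma iter_lim: assumes "0 \<le> k" shows "(\<lambda>n. iter E k s n x) \<longlonglongrightarrow> hk E k s x"
proof -
  have "convergent (\<lambda>n. iter E k s n x)"
    by (rule Bseq_monoseq_convergent[OF _ incseq_imp_monoseq[OF iter_incseq[OF assms]]])
       (rule BseqI'[where K=k], use iter_bounds[OF assms, of E s _ x] in \<open>simp add: abs_le_iff\<close>)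
  then show ?thesis unfolding hk_def by (simp add: convergent_LIMSEQ_iff)
qed

lemma hk_bounds: assumes "0 \<le> k" shows "0 \<le> hk E k s x \<and> hk E k s x \<le> k"
proof
  have a: "\<forall>n. 0 \<le> iter E k s n x" by (simp add: iter_ge0 assms)
  have b: "\<forall>n. iter E k s n x \<le> k" by (simp add: iter_lek assms)
  show "0 \<le> hk E k s x"
    by (rule LIMSEQ_le_const[OF iter_lim[OF assms]]) (use a in blast)
  show "hk E k s x \<le> k"
    by (rule LIMSEQ_le_const2[OF iter_lim[OF assms]]) (use b in blast)
qed

lemma iter_le_hk: assumes "0 \<le> k" shows "iter E k s n x \<le> hk E k s x"
  by (rule incseq_le[OF iter_incseq[OF assms] iter_lim[OF assms]])

lemma hk_fix: assumes "0 \<le> k" and fin: "finite (nbr E x)"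
  shows "Fop E k s (hk E k s) x = hk E k s x"
proof -
  have S: "(\<lambda>n. \<Sum>y\<in>nbr E x. iter E k s n y) \<longlonglongrightarrow> (\<Sum>y\<in>nbr E x. hk E k s y)"
    by (rule tendsto_sum) (rule iter_lim[OF assms(1)])
  have S2: "(\<lambda>n. (s x - 1 + (\<Sum>y\<in>nbr E x. iter E k s n y)) * inverse (real (card (nbr E x))))
     \<longlonglongrightarrow> (s x - 1 + (\<Sum>y\<in>nbr E x. hk E k s y)) * inverse (real (card (nbr E x)))"
    by (rule tendsto_mult_right) (rule tendsto_add[OF tendsto_const S])
  have S3: "(\<lambda>n. min k (max 0 ((s x - 1 + (\<Sum>y\<in>nbr E x. iter E k s n y)) * inverse (real (card (nbr E x))))))
     \<longlonglongrightarrow> min k (max 0 ((s x - 1 + (\<Sum>y\<in>nbr E x. hk E k s y)) * inverse (real (card (nbr E x)))))"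
    by (rule tendsto_min[OF tendsto_const tendsto_max[OF tendsto_const S2]])
  have "(\<lambda>n. Fop E k s (iter E k s n) x) \<longlonglongrightarrow> Fop E k s (hk E k s) x"
    using S3 unfolding Fop_def divide_inverse .
  moreover have "(\<lambda>n. Fop E k s (iter E k s n) x) \<longlonglongrightarrow> hk E k s x"
    using LIMSEQ_Suc[OF iter_lim[OF assms(1), of E s x]] by (simp only: iter_Suc)
  ultimately show ?thesis using LIMSEQ_unique by blast
qed

lemma hk_least:
  assumes "0 \<le> k" "\<And>y. 0 \<le> g y" "\<And>y. Fop E k s g y \<le> g y"
  shows "hk E k s x \<le> g x"
proof -
  have "iter E k s n y \<le> g y" for n y
  proof (induction n arbitrary: y)
    case 0 then show ?case using assms by (simp add: iter_0)
  next
    case (Suc n) then show ?case unfolding iter_Suc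
      using Fop_mono[of "iter E k s n" g] assms(3) order_trans by blast
  qed
  then show ?thesis by (intro LIMSEQ_le_const2[OF iter_lim[OF assms(1)]]) auto
qed

lemma laplacian_nbr: "laplacian E u x = (\<Sum>y\<in>nbr E x. u y) - real (card (nbr E x)) * u x"
  unfolding laplacian_def nbr_def by (simp add: sum_subtractf)

lemma stab_hk:
  assumes "0 \<le> k" "\<And>x. 0 \<le> f x" "\<And>x. s x + laplacian E f x \<le> 1" "finite (nbr E x)" "\<forall>x. finite (nbr E x)"
  shows "hk E k s x \<le> f x"
proof -
  have "hk E k s x \<le> min (f x) k"
  proof (rule hk_least[OF assms(1)])
    show "0 \<le> min (f y) k" for y using assms by auto
    show "Fop E k s (\<lambda>x. min (f x) k) y \<le> min (f y) k" for y
    proof -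
      have A: "(\<Sum>z\<in>nbr E y. min (f z) k) \<le> (\<Sum>z\<in>nbr E y. f z)" by (rule sum_mono) auto
      have B: "s y - 1 + (\<Sum>z\<in>nbr E y. f z) \<le> real (card (nbr E y)) * f y"
        using assms(3)[of y] unfolding laplacian_nbr by linarith
      have "(s y - 1 + (\<Sum>z\<in>nbr E y. min (f z) k)) / real (card (nbr E y)) \<le> f y"
      proof (cases "card (nbr E y) = 0")
        case True then show ?thesis using assms(2) by simp
      next
        case False then show ?thesis using A B by (simp add: divide_le_eq mult.commute)
      qed
      then show ?thesis unfolding Fop_def using assms(2)[of y] by linarith
    qed
  qed
  then show ?thesis by simp
qed

lemma hk_lap:
  assumes "0 \<le> k" "finite (nbr E x)" "card (nbr E x) > 0"
  shows "laplacian E (hk E k s) x \<le> (if hk E k s x < k then 1 - s x else 0)"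
proof (cases "hk E k s x < k")
  case True
  have "hk E k s x = Fop E k s (hk E k s) x" using hk_fix[OF assms(1,2)] by simp
  then have "(s x - 1 + (\<Sum>y\<in>nbr E x. hk E k s y)) / real (card (nbr E x)) \<le> hk E k s x"
    using True unfolding Fop_def by linarith
  then have "s x - 1 + (\<Sum>y\<in>nbr E x. hk E k s y) \<le> real (card (nbr E x)) * hk E k s x"
    using assms(3) by (simp add: divide_le_eq mult.commute)
  then show ?thesis using True unfolding laplacian_nbr by simp
next
  case False
  then have e: "hk E k s x = k" using hk_bounds[OF assms(1)] by (meson antisym not_less)
  have "(\<Sum>y\<in>nbr E x. hk E k s y) \<le> (\<Sum>y\<in>nbr E x. k)" by (rule sum_mono) (simp add: hk_bounds[OF assms(1)])
  then show ?thesis using False e unfolding laplacian_nbr by simp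
qed

lemma nbr_aut: assumes "graph_aut E \<gamma>" shows "nbr E (\<gamma> x) = \<gamma> ` nbr E x"
proof -
  have b: "bij \<gamma>" and e: "\<And>x y. E x y \<longleftrightarrow> E (\<gamma> x) (\<gamma> y)" using assms unfolding graph_aut_def by auto
  show ?thesis
  proof (intro set_eqI iffI)
    fix z assume "z \<in> nbr E (\<gamma> x)"
    then have "E (\<gamma> x) (\<gamma> (inv \<gamma> z))" using b by (simp add: nbr_def surj_f_inv_f bij_is_surj)
    then have "inv \<gamma> z \<in> nbr E x" unfolding nbr_def using e[of x "inv \<gamma> z"] by simp
    moreover have "z = \<gamma> (inv \<gamma> z)" using b by (simp add: surj_f_inv_f bij_is_surj)
    ultimately show "z \<in> \<gamma> ` nbr E x" by blast
  next
    fix z assume "z \<in> \<gamma> ` nbr E x"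
    then obtain y where y: "E x y" "z = \<gamma> y" unfolding nbr_def by blast
    then show "z \<in> nbr E (\<gamma> x)" unfolding nbr_def using e[of x y] by simp
  qed
qed

lemma iter_aut: assumes "graph_aut E \<gamma>"
  shows "iter E k (\<lambda>x. s (\<gamma> x)) n x = iter E k s n (\<gamma> x)"
proof (induction n arbitrary: x)
  case 0 then show ?case by (simp add: iter_0)
next
  case (Suc n)
  have inj: "inj \<gamma>" using assms unfolding graph_aut_def bij_def by auto
  have S1: "(\<Sum>y\<in>nbr E (\<gamma> x). iter E k s n y) = (\<Sum>y\<in>nbr E x. iter E k s n (\<gamma> y))"
    unfolding nbr_aut[OF assms] by (rule sum.reindex[unfolded comp_def]) (meson inj inj_on_subset subset_UNIV)
  have S2: "card (nbr E (\<gamma> x)) = card (nbr E x)"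
    unfolding nbr_aut[OF assms] by (meson card_image inj inj_on_subset subset_UNIV)
  have S3: "(\<Sum>y\<in>nbr E x. iter E k (\<lambda>x. s (\<gamma> x)) n y) = (\<Sum>y\<in>nbr E x. iter E k s n (\<gamma> y))"
    by (rule sum.cong[OF refl]) (rule Suc.IH)
  show ?case unfolding iter_Suc Fop_def by (simp only: S1 S2 S3)
qed

lemma hk_aut: assumes "graph_aut E \<gamma>"
  shows "hk E k (\<lambda>x. s (\<gamma> x)) x = hk E k s (\<gamma> x)"
  unfolding hk_def iter_aut[OF assms] ..

lemma meas_comp: assumes "sets M = sets (config_space :: ('v \<Rightarrow> real) measure)"
  shows "(\<lambda>s. s x) \<in> borel_measurable M"
proof -
  have "(\<lambda>s::'v\<Rightarrow>real. s x) \<in> borel_measurable config_space" unfolding config_space_def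
    by (rule measurable_component_singleton) simp
  then show ?thesis using measurable_cong_sets[OF assms refl] by blast
qed

lemma meas_iter: assumes "sets M = sets (config_space :: ('v \<Rightarrow> real) measure)"
  shows "(\<lambda>s. iter E k s n x) \<in> borel_measurable M"
proof (induction n arbitrary: x)
  case 0 then show ?case by (simp add: iter_0)
next
  case (Suc n)
  have A: "(\<lambda>s. \<Sum>y\<in>nbr E x. iter E k s n y) \<in> borel_measurable M"
    by (rule borel_measurable_sum) (rule Suc.IH)
  have C: "(\<lambda>s. s x - 1 + (\<Sum>y\<in>nbr E x. iter E k s n y)) \<in> borel_measurable M"
    using A meas_comp[OF assms] by (intro borel_measurable_add borel_measurable_diff) auto
  have D: "(\<lambda>s. (s x - 1 + (\<Sum>y\<in>nbr E x. iter E k s n y)) / real (card (nbr E x))) \<in> borel_measurable M"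
    using C by (rule borel_measurable_divide) simp
  have "(\<lambda>s. min k (max 0 ((s x - 1 + (\<Sum>y\<in>nbr E x. iter E k s n y)) / real (card (nbr E x))))) \<in> borel_measurable M"
    using D by (intro borel_measurable_min borel_measurable_max) auto
  then show ?case unfolding iter_Suc Fop_def .
qed

lemma meas_hk: assumes "sets M = sets (config_space :: ('v \<Rightarrow> real) measure)" "0 \<le> k"
  shows "(\<lambda>s. hk E k s x) \<in> borel_measurable M"
  by (rule borel_measurable_LIMSEQ_real[OF iter_lim[OF assms(2)] meas_iter[OF assms(1)]])

lemma countable_V: fixes E :: "'v \<Rightarrow> 'v \<Rightarrow> bool" assumes "connected_graph E" "locally_finite E"
  shows "countable (UNIV :: 'v set)"
proof -
  fix w :: 'v
  have fin: "finite {y. (E ^^ n) w y}" for n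
  proof (induction n)
    case 0 then show ?case by simp
  next
    case (Suc n)
    have "{y. (E ^^ Suc n) w y} \<subseteq> (\<Union>z\<in>{y. (E ^^ n) w y}. {y. E z y})"
      by (auto elim: relpowp_Suc_E)
    moreover have "finite (\<Union>z\<in>{y. (E ^^ n) w y}. {y. E z y})"
      using Suc assms(2) unfolding locally_finite_def by blast
    ultimately show ?case by (rule finite_subset)
  qed
  have "UNIV = (\<Union>n. {y. (E ^^ n) w y})"
    using assms(1) unfolding connected_graph_def rtranclp_power by auto
  also have "countable \<dots>" using fin by (intro countable_UN) (auto intro: countable_finite)
  finally show ?thesis .
qed

theorem lemma4p1:
  fixes E :: "'v \<Rightarrow> 'v \<Rightarrow> bool" and v0 :: 'v and \<Gamma> :: "('v \<Rightarrow> 'v) set"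
    and M :: "('v \<Rightarrow> real) measure"
  assumes "simple_graph E" and "infinite (UNIV :: 'v set)" and "connected_graph E"
    and "locally_finite E" and "vertex_transitive E"
    and "aut_subgroup E \<Gamma>" and "transitive_action \<Gamma>"
    and "prob_space M" and "sets M = sets config_space"
    and "gamma_invariant \<Gamma> M" and "gamma_ergodic \<Gamma> M"
    and "integrable M (\<lambda>s. s v0)"
    and "(\<integral>s. s v0 \<partial>M) > 1"
  shows "AE s in M. \<not> stabilizes E s"
proof -
  interpret P: prob_space M by fact
  note sM = assms(9)
  have spM: "space M = UNIV"
    using sets_eq_imp_space_eq[OF sM] by (simp add: config_space_def space_PiM)
  have finN: "\<And>x. finite (nbr E x)" using assms(4) unfolding locally_finite_def nbr_def by auto
  have aut: "\<And>\<alpha>. \<alpha> \<in> \<Gamma> \<Longrightarrow> graph_aut E \<alpha>" and invG: "\<And>\<alpha>. \<alpha> \<in> \<Gamma> \<Longrightarrow> inv \<alpha> \<in> \<Gamma>"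
    using assms(6) unfolding aut_subgroup_def by auto
  have cntV: "countable (UNIV :: 'v set)" by (rule countable_V[OF assms(3,4)])
  have deg: "card (nbr E v0) > 0"
  proof -
    have "UNIV \<noteq> {v0}" using assms(2) by (metis finite.emptyI finite_insert)
    then obtain y :: 'v where "y \<noteq> v0" by blast
    moreover have "E\<^sup>*\<^sup>* v0 y" using assms(3) unfolding connected_graph_def by auto
    ultimately obtain z where "E v0 z" by (metis converse_rtranclpE)
    then have "nbr E v0 \<noteq> {}" by (auto simp: nbr_def)
    then show ?thesis using finN[of v0] by (simp add: card_gt_0_iff)
  qed
  have hkm: "\<And>k x. (\<lambda>s. hk E (real k) s x) \<in> borel_measurable M"
    by (rule meas_hk[OF sM]) simp
  have s0m: "(\<lambda>s. s v0) \<in> borel_measurable M" by (rule meas_comp[OF sM])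
  have Ak: "\<And>k x. {s \<in> space M. hk E (real k) s x < real k} \<in> sets M"
  proof -
    fix k :: nat and x
    have "(\<lambda>s. hk E (real k) s x) -` {..<real k} \<inter> space M \<in> sets M"
      by (rule measurable_sets[OF hkm]) simp
    moreover have "(\<lambda>s. hk E (real k) s x) -` {..<real k} \<inter> space M = {s \<in> space M. hk E (real k) s x < real k}"
      by auto
    ultimately show "{s \<in> space M. hk E (real k) s x < real k} \<in> sets M" by simp
  qed
  define B where "B = {s::'v\<Rightarrow>real. \<forall>x. \<exists>n::nat. \<forall>k\<ge>n. hk E (real k) s x < real k}"
  have Bm: "B \<in> sets M"
  proof -
    have "{s \<in> space M. \<forall>x\<in>UNIV. \<exists>n::nat. \<forall>k::nat. n \<le> k \<longrightarrow> hk E (real k) s x < real k} \<in> sets M"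
    proof (rule sets.sets_Collect_countable_All'[OF _ cntV])
      fix x :: 'v
      show "{s \<in> space M. \<exists>n::nat. \<forall>k::nat. n \<le> k \<longrightarrow> hk E (real k) s x < real k} \<in> sets M"
      proof (rule sets.sets_Collect_countable_Ex)
        fix n :: nat
        show "{s \<in> space M. \<forall>k::nat. n \<le> k \<longrightarrow> hk E (real k) s x < real k} \<in> sets M"
        proof (rule sets.sets_Collect_countable_All)
          fix k :: nat
          have "{s \<in> space M. hk E (real k) s x < real k} \<in> sets M"
            by (rule Ak)
          then show "{s \<in> space M. n \<le> k \<longrightarrow> hk E (real k) s x < real k} \<in> sets M"
            by (cases "n \<le> k") (use sets.top[of M] in \<open>auto simp: spM\<close>)
        qed
      qed
    qed
    then show ?thesis unfolding B_def spM by simp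
  qed
  have Binv: "\<forall>\<alpha>\<in>\<Gamma>. shift \<alpha> -` B \<inter> space M = B"
  proof
    fix \<alpha> assume a: "\<alpha> \<in> \<Gamma>"
    define \<gamma> where "\<gamma> = inv \<alpha>"
    have g: "graph_aut E \<gamma>" using aut invG a unfolding \<gamma>_def by blast
    then have sg: "surj \<gamma>" unfolding graph_aut_def bij_def by auto
    have "shift \<alpha> s \<in> B \<longleftrightarrow> s \<in> B" for s
    proof -
      have sh: "shift \<alpha> s = (\<lambda>x. s (\<gamma> x))" unfolding shift_def \<gamma>_def ..
      have "shift \<alpha> s \<in> B \<longleftrightarrow> (\<forall>x. \<exists>n::nat. \<forall>k\<ge>n. hk E (real k) s (\<gamma> x) < real k)"
        unfolding sh B_def mem_Collect_eq hk_aut[OF g] ..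
      also have "\<dots> \<longleftrightarrow> s \<in> B"
      proof
        assume H: "\<forall>x. \<exists>n::nat. \<forall>k\<ge>n. hk E (real k) s (\<gamma> x) < real k"
        show "s \<in> B" unfolding B_def mem_Collect_eq
        proof
          fix x
          have "x = \<gamma> (inv \<gamma> x)" by (rule surj_f_inv_f[OF sg, symmetric])
          then show "\<exists>n::nat. \<forall>k\<ge>n. hk E (real k) s x < real k" using H[rule_format, of "inv \<gamma> x"] by simp
        qed
      next
        assume "s \<in> B"
        then show "\<forall>x. \<exists>n::nat. \<forall>k\<ge>n. hk E (real k) s (\<gamma> x) < real k" unfolding B_def by blast
      qed
      finally show ?thesis .
    qed
    then show "shift \<alpha> -` B \<inter> space M = B" by (auto simp: spM)
  qed
  have stabB: "stabilizes E s \<Longrightarrow> s \<in> B" for s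
  proof -
    assume "stabilizes E s"
    then obtain f where f0: "\<And>x. 0 \<le> f x" and fs: "\<And>x. s x + laplacian E f x \<le> 1"
      unfolding stabilizes_def by blast
    show "s \<in> B" unfolding B_def
    proof (intro CollectI allI)
      fix x
      obtain n :: nat where n: "f x < real n" using reals_Archimedean2 by blast
      have "\<forall>k\<ge>n. hk E (real k) s x < real k"
      proof (intro allI impI)
        fix k assume "n \<le> k"
        have "hk E (real k) s x \<le> f x" by (rule stab_hk[OF _ f0 fs finN]) (auto simp: finN)
        then show "hk E (real k) s x < real k" using n \<open>n \<le> k\<close> by linarith
      qed
      then show "\<exists>n::nat. \<forall>k\<ge>n. hk E (real k) s x < real k" by blast
    qed
  qed
  \<comment> \<open>the expectation of the Laplacian of hk at v0 vanishes\<close>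
  have inth: "\<And>k y. integrable M (\<lambda>s. hk E (real k) s y)"
  proof -
    fix k :: nat and y
    show "integrable M (\<lambda>s. hk E (real k) s y)"
    proof (rule P.integrable_const_bound[where B="real k"])
      have "\<And>s. 0 \<le> hk E (real k) s y \<and> hk E (real k) s y \<le> real k" by (rule hk_bounds) simp
      then show "AE s in M. norm (hk E (real k) s y) \<le> real k" by (intro AE_I2) auto
      show "(\<lambda>s. hk E (real k) s y) \<in> borel_measurable M" by (rule hkm)
    qed
  qed
  have inv_int: "\<And>k y. (\<integral>s. hk E (real k) s y \<partial>M) = (\<integral>s. hk E (real k) s v0 \<partial>M)"
  proof -
    fix k :: nat and y
    obtain \<alpha> where a: "\<alpha> \<in> \<Gamma>" "\<alpha> v0 = y" using assms(7) unfolding transitive_action_def by blast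
    define \<beta> where "\<beta> = inv \<alpha>"
    have b: "\<beta> \<in> \<Gamma>" using invG a unfolding \<beta>_def by blast
    have ba: "bij \<alpha>" using aut[OF a(1)] unfolding graph_aut_def by auto
    have ib: "inv \<beta> = \<alpha>" unfolding \<beta>_def using ba by (simp add: inv_inv_eq)
    have shm: "shift \<beta> \<in> measurable M M"
    proof -
      have "(\<lambda>s i. s (inv \<beta> i)) \<in> measurable M config_space" unfolding config_space_def
        by (rule measurable_PiM_single') (auto intro: meas_comp[OF sM, unfolded config_space_def])
      then show ?thesis unfolding shift_def using measurable_cong_sets[OF refl sM] by blast
    qed
    have "(\<integral>s. hk E (real k) s v0 \<partial>M) = (\<integral>s. hk E (real k) s v0 \<partial>(distr M M (shift \<beta>)))"
      using assms(10) b unfolding gamma_invariant_def by simp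
    also have "\<dots> = (\<integral>s. hk E (real k) (shift \<beta> s) v0 \<partial>M)"
      by (rule integral_distr[OF shm hkm])
    also have "\<dots> = (\<integral>s. hk E (real k) s y \<partial>M)"
      unfolding shift_def ib hk_aut[OF aut[OF a(1)]] a(2) ..
    finally show "(\<integral>s. hk E (real k) s y \<partial>M) = (\<integral>s. hk E (real k) s v0 \<partial>M)" ..
  qed
  define g where "g k s = (if hk E (real k) s v0 < real k then 1 - s v0 else 0)" for k :: nat and s
  have intw: "integrable M (\<lambda>s. 1 - s v0)" using assms(12) by simp
  have gm: "\<And>k. g k \<in> borel_measurable M"
  proof -
    fix k
    show "g k \<in> borel_measurable M" unfolding g_def[abs_def]
      by (rule measurable_If[OF _ _ Ak]) (auto intro: borel_measurable_diff s0m borel_measurable_const)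
  qed
  have gb: "\<And>k s. norm (g k s) \<le> 1 - s v0 \<or> norm (g k s) \<le> norm (1 - s v0)"
    unfolding g_def by auto
  have gb': "\<And>k s. norm (g k s) \<le> norm (1 - s v0)" unfolding g_def by auto
  have intg: "\<And>k. integrable M (g k)"
    by (rule Bochner_Integration.integrable_bound[OF intw gm]) (use gb' in \<open>auto intro!: AE_I2\<close>)
  have gpos: "\<And>k. 0 \<le> integral\<^sup>L M (g k)"
  proof -
    fix k :: nat
    have "(\<integral>s. laplacian E (hk E (real k) s) v0 \<partial>M) = 0"
    proof -
      have "(\<integral>s. laplacian E (hk E (real k) s) v0 \<partial>M)
          = (\<integral>s. (\<Sum>y\<in>nbr E v0. hk E (real k) s y - hk E (real k) s v0) \<partial>M)"
        unfolding laplacian_def nbr_def ..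
      also have "\<dots> = (\<Sum>y\<in>nbr E v0. \<integral>s. hk E (real k) s y - hk E (real k) s v0 \<partial>M)"
        by (rule Bochner_Integration.integral_sum) (intro Bochner_Integration.integrable_diff inth)
      also have "\<dots> = 0"
      proof (rule sum.neutral, rule ballI)
        fix y assume "y \<in> nbr E v0"
        have "(\<integral>s. hk E (real k) s y - hk E (real k) s v0 \<partial>M) = (\<integral>s. hk E (real k) s y \<partial>M) - (\<integral>s. hk E (real k) s v0 \<partial>M)"
          by (rule Bochner_Integration.integral_diff[OF inth inth])
        then show "(\<integral>s. hk E (real k) s y - hk E (real k) s v0 \<partial>M) = 0" using inv_int[of k y] by simp
      qed
      finally show ?thesis .
    qed
    moreover have "(\<integral>s. laplacian E (hk E (real k) s) v0 \<partial>M) \<le> integral\<^sup>L M (g k)"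
    proof (rule integral_mono[OF _ intg])
      show "integrable M (\<lambda>s. laplacian E (hk E (real k) s) v0)"
        unfolding laplacian_def by (intro Bochner_Integration.integrable_sum Bochner_Integration.integrable_diff inth)
      show "laplacian E (hk E (real k) s) v0 \<le> g k s" for s
        unfolding g_def by (rule hk_lap[OF _ finN deg]) simp
    qed
    ultimately show "0 \<le> integral\<^sup>L M (g k)" by simp
  qed
  have "measure M B = 0 \<or> measure M B = 1"
    using assms(11) Bm Binv unfolding gamma_ergodic_def by blast
  moreover have "measure M B \<noteq> 1"
  proof
    assume "measure M B = 1"
    then have aeB: "AE s in M. s \<in> B" by (rule P.AE_prob_1)
    have lim: "AE s in M. (\<lambda>k. g k s) \<longlonglongrightarrow> 1 - s v0"
      using aeB
    proof (rule AE_mp[OF _ AE_I2], intro impI)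
      fix s assume "s \<in> B"
      then obtain n :: nat where n: "\<forall>k\<ge>n. hk E (real k) s v0 < real k" unfolding B_def by blast
      have "eventually (\<lambda>k. g k s = 1 - s v0) sequentially"
        unfolding eventually_sequentially g_def using n by auto
      then show "(\<lambda>k. g k s) \<longlonglongrightarrow> 1 - s v0" by (rule tendsto_eventually)
    qed
    have "(\<lambda>k. integral\<^sup>L M (g k)) \<longlonglongrightarrow> (\<integral>s. 1 - s v0 \<partial>M)"
      by (rule integral_dominated_convergence[OF _ gm integrable_abs[OF intw] lim])
         (use gb' in \<open>auto intro!: AE_I2 borel_measurable_diff borel_measurable_const s0m\<close>)
    then have "0 \<le> (\<integral>s. 1 - s v0 \<partial>M)" by (rule LIMSEQ_le_const) (use gpos in auto)
    moreover have "(\<integral>s. 1 - s v0 \<partial>M) = 1 - (\<integral>s. s v0 \<partial>M)"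
      using assms(12) by (simp add: Bochner_Integration.integral_diff P.prob_space)
    ultimately show False using assms(13) by simp
  qed
  ultimately have "measure M B = 0" by blast
  then have "B \<in> null_sets M" using Bm by (simp add: P.emeasure_eq_measure null_sets_def)
  then have "AE s in M. s \<notin> B" by (rule AE_not_in)
  then show ?thesis by (rule AE_mp) (auto intro!: AE_I2 dest: stabB)
qed

end
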